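(* Let $(J,R,\sigma)$ be a generalized complex structure of type $1$ on a real $4$-dimensional Lie algebra $\mathfrak g$, with pure spinor $\rho=(\theta+iJ^*\theta)+(i-\lambda)\omega\wedge(\theta+iJ^*\theta)$ as described in the context. Then $d\rho=0$ (the structure is Calabi–Yau) if and only if $[\mathfrak g,\mathfrak g]\subset\operatorname{Im}R$.
   Context: Let $\mathfrak g$ be a real finite-dimensional Lie algebra, $\Phi(\mathfrak g)=\mathfrak g\oplus\mathfrak g^*$ with the neutral pairing $\langle u+\alpha,v+\beta\rangle=\tfrac12(\alpha(v)+\beta(u))$ and the bracket $[u+\alpha,v+\beta]=[u,v]+\mathrm{ad}_u^t\beta-\mathrm{ad}_v^t\alpha$, where $(\mathrm{ad}_u^t\alpha)(v)=-\alpha([u,v])$. A generalized complex structure on $\mathfrak g$ is an endomorphism $K$ of $\Phi(\mathfrak g)$ with $K^2=-\mathrm{Id}$, $\langle Ka,b\rangle+\langle a,Kb\rangle=0$ for all $a,b$, and vanishing Nijenhuis torsion $N_K(a,b)=[Ka,Kb]-K[Ka,b]-K[a,Kb]+K^2[a,b]$. Writing $K=\begin{pmatrix}J&R\\ \sigma&-J^*\end{pmatrix}$ with $J\in\mathrm{End}(\mathfrak g)$ and skew-symmetric $R:\mathfrak g^*\to\mathfrak g$, $\sigma:\mathfrak g\to\mathfrak g^*$, the triple $(J,R,\sigma)$ is also called a generalized complex structure on $\mathfrak g$; in dimension 4 it is of type 1 if $\operatorname{rank}R=2$. For such a structure, with $\mathfrak h=\operatorname{Im}R$, $\mathfrak p=\ker\sigma$,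 one has $\mathfrak g=\mathfrak h\oplus\mathfrak p$ and $J|_{\mathfrak h}=\lambda\mathrm{Id}$; $\omega\in\wedge^2\mathfrak g^*$ is defined by $\omega(R\xi_1,R\xi_2)=\xi_1(R\xi_2)$ and $i_X\omega=0$ for $X\in\mathfrak p$; $\theta$ is a nonzero element of the annihilator $\mathfrak h^0$. $d$ denotes the Chevalley–Eilenberg differential on $\wedge^\bullet\mathfrak g^*\otimes\mathbb C$. *)

theory Defs
  imports "HOL-Analysis.Analysis"
begin

text \<open>The Lie algebra g is realised on the 4-dimensional real vector space real^4
  (every real 4-dimensional Lie algebra is isomorphic to one of these), with bracket B.
  Elements of g* are linear functionals real^4 => real; Phi(g) = g + g* is represented by
  pairs (u, alpha) with alpha linear.\<close>

type_synonym vec = "real^4"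
type_synonym cov = "real^4 \<Rightarrow> real"
type_synonym phi = "vec \<times> cov"

definition lie_algebra :: "(vec \<Rightarrow> vec \<Rightarrow> vec) \<Rightarrow> bool" where
  "lie_algebra B \<longleftrightarrow> bilinear B \<and> (\<forall>x. B x x = 0) \<and>
     (\<forall>x y z. B x (B y z) + B y (B z x) + B z (B x y) = 0)"

definition lin_dual :: "cov set" where
  "lin_dual = {\<xi>. linear \<xi>}"

definition Phi :: "phi set" where
  "Phi = {(u, \<alpha>). linear \<alpha>}"

definition padd :: "phi \<Rightarrow> phi \<Rightarrow> phi" where
  "padd a b = (fst a + fst b, \<lambda>w. snd a w + snd b w)"

definition pneg :: "phi \<Rightarrow> phi" where
  "pneg a = (- fst a, \<lambda>w. - snd a w)"

definition psub :: "phi \<Rightarrow> phi \<Rightarrow> phi" where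
  "psub a b = padd a (pneg b)"

definition pzero :: phi where
  "pzero = (0, \<lambda>w. 0)"

definition pairing :: "phi \<Rightarrow> phi \<Rightarrow> real" where
  "pairing a b = (snd a (fst b) + snd b (fst a)) / 2"

definition adt :: "(vec \<Rightarrow> vec \<Rightarrow> vec) \<Rightarrow> vec \<Rightarrow> cov \<Rightarrow> cov" where
  "adt B u \<alpha> = (\<lambda>v. - \<alpha> (B u v))"

definition pbracket :: "(vec \<Rightarrow> vec \<Rightarrow> vec) \<Rightarrow> phi \<Rightarrow> phi \<Rightarrow> phi" where
  "pbracket B a b = (B (fst a) (fst b), \<lambda>w. adt B (fst a) (snd b) w - adt B (fst b) (snd a) w)"

text \<open>K = [[J, R], [sigma, -J^*]], with (J^* alpha)(v) = alpha(J v)\<close>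
definition Kmat :: "(vec \<Rightarrow> vec) \<Rightarrow> (cov \<Rightarrow> vec) \<Rightarrow> (vec \<Rightarrow> cov) \<Rightarrow> phi \<Rightarrow> phi" where
  "Kmat J R \<sigma> a = (J (fst a) + R (snd a), \<lambda>v. \<sigma> (fst a) v - snd a (J v))"

definition nijenhuis :: "(vec \<Rightarrow> vec \<Rightarrow> vec) \<Rightarrow> (phi \<Rightarrow> phi) \<Rightarrow> phi \<Rightarrow> phi \<Rightarrow> phi" where
  "nijenhuis B K a b =
     padd (psub (psub (pbracket B (K a) (K b)) (K (pbracket B (K a) b))) (K (pbracket B a (K b))))
          (K (K (pbracket B a b)))"

definition gen_complex :: "(vec \<Rightarrow> vec \<Rightarrow> vec) \<Rightarrow> (vec \<Rightarrow> vec) \<Rightarrow> (cov \<Rightarrow> vec) \<Rightarrow> (vec \<Rightarrow> cov) \<Rightarrow> bool" where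
  "gen_complex B J R \<sigma> \<longleftrightarrow>
     linear J \<and>
     (\<forall>\<xi>\<in>lin_dual. \<forall>\<eta>\<in>lin_dual. \<forall>a b::real. R (\<lambda>v. a * \<xi> v + b * \<eta> v) = a *\<^sub>R R \<xi> + b *\<^sub>R R \<eta>) \<and>
     bilinear \<sigma> \<and>
     (\<forall>\<xi>\<in>lin_dual. \<forall>\<eta>\<in>lin_dual. \<xi> (R \<eta>) = - \<eta> (R \<xi>)) \<and>
     (\<forall>u v. \<sigma> u v = - \<sigma> v u) \<and>
     (\<forall>a\<in>Phi. Kmat J R \<sigma> (Kmat J R \<sigma> a) = pneg a) \<and>
     (\<forall>a\<in>Phi. \<forall>b\<in>Phi. pairing (Kmat J R \<sigma> a) b + pairing a (Kmat J R \<sigma> b) = 0) \<and>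
     (\<forall>a\<in>Phi. \<forall>b\<in>Phi. nijenhuis B (Kmat J R \<sigma>) a b = pzero)"

definition type1 :: "(cov \<Rightarrow> vec) \<Rightarrow> bool" where
  "type1 R \<longleftrightarrow> dim (R ` lin_dual) = 2"

text \<open>Complex forms on g are represented as complex-valued alternating multilinear maps.
  Chevalley--Eilenberg differential on 1-forms and 3-forms:
  d alpha(x0,...,xk) = sum_{i<j} (-1)^(i+j) alpha([xi,xj], x0,..^..^..,xk).\<close>
definition ce_d1 :: "(vec \<Rightarrow> vec \<Rightarrow> vec) \<Rightarrow> (vec \<Rightarrow> complex) \<Rightarrow> vec \<Rightarrow> vec \<Rightarrow> complex" where
  "ce_d1 B \<alpha> x0 x1 = - \<alpha> (B x0 x1)"

definition ce_d3 :: "(vec \<Rightarrow> vec \<Rightarrow> vec) \<Rightarrow> (vec \<Rightarrow> vec \<Rightarrow> vec \<Rightarrow> complex) \<Rightarrow>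
    vec \<Rightarrow> vec \<Rightarrow> vec \<Rightarrow> vec \<Rightarrow> complex" where
  "ce_d3 B \<beta> x0 x1 x2 x3 =
       \<beta> (B x0 x1) x2 x3 - \<beta> (B x0 x2) x1 x3 + \<beta> (B x0 x3) x1 x2
     + \<beta> (B x1 x2) x0 x3 - \<beta> (B x1 x3) x0 x2 + \<beta> (B x2 x3) x0 x1"

definition wedge21 :: "(vec \<Rightarrow> vec \<Rightarrow> complex) \<Rightarrow> (vec \<Rightarrow> complex) \<Rightarrow> vec \<Rightarrow> vec \<Rightarrow> vec \<Rightarrow> complex" where
  "wedge21 \<omega> \<phi> x y z = \<omega> x y * \<phi> z + \<omega> y z * \<phi> x + \<omega> z x * \<phi> y"

definition spinor1 :: "(vec \<Rightarrow> vec) \<Rightarrow> cov \<Rightarrow> vec \<Rightarrow> complex" where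
  "spinor1 J \<theta> x = complex_of_real (\<theta> x) + \<i> * complex_of_real (\<theta> (J x))"

definition spinor3 :: "(vec \<Rightarrow> vec) \<Rightarrow> real \<Rightarrow> (vec \<Rightarrow> vec \<Rightarrow> real) \<Rightarrow> cov \<Rightarrow>
    vec \<Rightarrow> vec \<Rightarrow> vec \<Rightarrow> complex" where
  "spinor3 J lam \<omega> \<theta> x y z =
     (\<i> - complex_of_real lam) * wedge21 (\<lambda>u v. complex_of_real (\<omega> u v)) (spinor1 J \<theta>) x y z"

text \<open>d rho = 0 for the mixed-degree form rho = spinor1 + spinor3 (componentwise in degrees 2 and 4)\<close>
definition d_rho_zero :: "(vec \<Rightarrow> vec \<Rightarrow> vec) \<Rightarrow> (vec \<Rightarrow> vec) \<Rightarrow> real \<Rightarrow> (vec \<Rightarrow> vec \<Rightarrow> real) \<Rightarrow> cov \<Rightarrow> bool" where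
  "d_rho_zero B J lam \<omega> \<theta> \<longleftrightarrow>
     (\<forall>x0 x1. ce_d1 B (spinor1 J \<theta>) x0 x1 = 0) \<and>
     (\<forall>x0 x1 x2 x3. ce_d3 B (spinor3 J lam \<omega> \<theta>) x0 x1 x2 x3 = 0)"

end

theory Submission
  imports Defs
begin

lemma lin_sp1: assumes "linear \<theta>" "linear J" shows "linear (spinor1 J \<theta>)"
  unfolding spinor1_def
  apply (rule linearI)
  apply (simp_all add: linear_add[OF assms(1)] linear_add[OF assms(2)] linear_cmul[OF assms(1)] linear_cmul[OF assms(2)] algebra_simps)
  apply (simp add: scaleR_conv_of_real algebra_simps)
  done


lemma ce_d3_lin:
  fixes \<beta> :: "vec \<Rightarrow> vec \<Rightarrow> vec \<Rightarrow> complex"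
  assumes B: "bilinear B" and l1: "\<And>y z. linear (\<lambda>x. \<beta> x y z)" and l2: "\<And>x z. linear (\<lambda>y. \<beta> x y z)"
    and l3: "\<And>x y. linear (\<lambda>z. \<beta> x y z)"
  shows "linear (\<lambda>x. ce_d3 B \<beta> x x1 x2 x3)" "linear (\<lambda>x. ce_d3 B \<beta> x0 x x2 x3)"
    "linear (\<lambda>x. ce_d3 B \<beta> x0 x1 x x3)" "linear (\<lambda>x. ce_d3 B \<beta> x0 x1 x2 x)"
proof -
  have a1: "\<beta> (a+b) y z = \<beta> a y z + \<beta> b y z" "\<beta> (c *\<^sub>R a) y z = c *\<^sub>R \<beta> a y z" for a b c y z
    using linear_add[OF l1[of y z]] linear_cmul[OF l1[of y z]] by auto
  have a2: "\<beta> y (a+b) z = \<beta> y a z + \<beta> y b z" "\<beta> y (c *\<^sub>R a) z = c *\<^sub>R \<beta> y a z" for a b c y z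
    using linear_add[OF l2[of y z]] linear_cmul[OF l2[of y z]] by auto
  have a3: "\<beta> y z (a+b) = \<beta> y z a + \<beta> y z b" "\<beta> y z (c *\<^sub>R a) = c *\<^sub>R \<beta> y z a" for a b c y z
    using linear_add[OF l3[of y z]] linear_cmul[OF l3[of y z]] by auto
  note ss = a1 a2 a3 bilinear_ladd[OF B] bilinear_radd[OF B] bilinear_lmul[OF B] bilinear_rmul[OF B]
  show "linear (\<lambda>x. ce_d3 B \<beta> x x1 x2 x3)" "linear (\<lambda>x. ce_d3 B \<beta> x0 x x2 x3)"
    "linear (\<lambda>x. ce_d3 B \<beta> x0 x1 x x3)" "linear (\<lambda>x. ce_d3 B \<beta> x0 x1 x2 x)"
    unfolding ce_d3_def by (rule linearI; simp add: ss algebra_simps)+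
qed

lemma bil_c: assumes "bilinear \<omega>" shows "bilinear (\<lambda>u v. complex_of_real (\<omega> u v))"
  unfolding bilinear_def
  apply (intro conjI allI linearI)
  apply (simp_all add: bilinear_ladd[OF assms] bilinear_radd[OF assms] bilinear_lmul[OF assms] bilinear_rmul[OF assms])
  apply (simp_all add: scaleR_conv_of_real)
  done

lemma lin_w21:
  assumes "bilinear \<omega>" "linear \<phi>"
  shows "linear (\<lambda>x. wedge21 \<omega> \<phi> x y z)" "linear (\<lambda>y. wedge21 \<omega> \<phi> x y z)" "linear (\<lambda>z. wedge21 \<omega> \<phi> x y z)"
  unfolding wedge21_def
  by (rule linearI; simp add: linear_add linear_scale bilinear_ladd bilinear_radd bilinear_lmul bilinear_rmul assms algebra_simps)+

lemma lin_sp3: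
  assumes "bilinear \<omega>" "linear \<theta>" "linear J"
  shows "linear (\<lambda>x. spinor3 J lam \<omega> \<theta> x y z)" "linear (\<lambda>y. spinor3 J lam \<omega> \<theta> x y z)" "linear (\<lambda>z. spinor3 J lam \<omega> \<theta> x y z)"
proof -
  have lp: "linear (spinor1 J \<theta>)" by (rule lin_sp1[OF assms(2,3)])
  note w = lin_w21[OF bil_c[OF assms(1)] lp]
  show "linear (\<lambda>x. spinor3 J lam \<omega> \<theta> x y z)" "linear (\<lambda>y. spinor3 J lam \<omega> \<theta> x y z)" "linear (\<lambda>z. spinor3 J lam \<omega> \<theta> x y z)"
    unfolding spinor3_def
    by (rule linearI; simp add: linear_add[OF w(1)] linear_add[OF w(2)] linear_add[OF w(3)]
         linear_cmul[OF w(1)] linear_cmul[OF w(2)] linear_cmul[OF w(3)] algebra_simps)+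
qed

theorem proposition2p3:
  fixes B :: "vec \<Rightarrow> vec \<Rightarrow> vec" and J :: "vec \<Rightarrow> vec" and R :: "cov \<Rightarrow> vec"
    and \<sigma> :: "vec \<Rightarrow> cov" and lam :: real and \<omega> :: "vec \<Rightarrow> vec \<Rightarrow> real" and \<theta> :: cov
  assumes "lie_algebra B"
    and "gen_complex B J R \<sigma>"
    and "type1 R"
    and lam: "\<forall>x \<in> R ` lin_dual. J x = lam *\<^sub>R x"
    and om_bil: "bilinear \<omega>" and om_skew: "\<forall>x y. \<omega> x y = - \<omega> y x"
    and om_R: "\<forall>\<xi>1\<in>lin_dual. \<forall>\<xi>2\<in>lin_dual. \<omega> (R \<xi>1) (R \<xi>2) = \<xi>1 (R \<xi>2)"
    and om_p: "\<forall>X \<in> {X. \<forall>v. \<sigma> X v = 0}. \<forall>Y. \<omega> X Y = 0"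
    and th: "linear \<theta>" "\<theta> \<noteq> (\<lambda>x. 0)" "\<forall>x \<in> R ` lin_dual. \<theta> x = 0"
  shows "d_rho_zero B J lam \<omega> \<theta> \<longleftrightarrow> span {B x y | x y. True} \<subseteq> R ` lin_dual"
proof -
  define h where "h = R ` lin_dual"
  note gc = assms(2)[unfolded gen_complex_def]
  have JL: "linear J" using gc by blast
  have RL: "\<And>\<xi> \<eta> a b. \<xi> \<in> lin_dual \<Longrightarrow> \<eta> \<in> lin_dual \<Longrightarrow> R (\<lambda>v. a * \<xi> v + b * \<eta> v) = a *\<^sub>R R \<xi> + b *\<^sub>R R \<eta>"
    using gc by blast
  have sb: "bilinear \<sigma>" using gc by blast
  have Rsk: "\<And>\<xi> \<eta>. \<xi> \<in> lin_dual \<Longrightarrow> \<eta> \<in> lin_dual \<Longrightarrow> \<xi> (R \<eta>) = - \<eta> (R \<xi>)" using gc by blast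
  have ssk: "\<And>u v. \<sigma> u v = - \<sigma> v u" using gc by blast
  have KK: "\<And>a. a \<in> Phi \<Longrightarrow> Kmat J R \<sigma> (Kmat J R \<sigma> a) = pneg a" using gc by blast
  have NN: "\<And>a b. a \<in> Phi \<Longrightarrow> b \<in> Phi \<Longrightarrow> nijenhuis B (Kmat J R \<sigma>) a b = pzero" using gc by blast
  have Bb: "bilinear B" and Bxx: "\<And>x. B x x = 0" using assms(1) unfolding lie_algebra_def by blast+
  have Bsk: "B x y = - B y x" for x y
  proof -
    have "B (x+y) (x+y) = B x x + B x y + (B y x + B y y)" by (simp add: bilinear_ladd[OF Bb] bilinear_radd[OF Bb])
    then have "B x y + B y x = 0" by (simp add: Bxx)
    then show ?thesis by (simp add: eq_neg_iff_add_eq_0)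
  qed
  have ld: "\<And>\<xi>. \<xi> \<in> lin_dual \<longleftrightarrow> linear \<xi>" by (simp add: lin_dual_def)
  have z0d: "(\<lambda>v::vec. 0::real) \<in> lin_dual" by (simp add: ld linear_zero)
  have R0: "R (\<lambda>v. 0) = 0" using RL[OF z0d z0d, of 0 0] by simp
  have sl: "\<And>u. \<sigma> u \<in> lin_dual" using sb unfolding bilinear_def ld by auto
  have Rsc: "\<And>\<xi> c. \<xi> \<in> lin_dual \<Longrightarrow> R (\<lambda>v. c * \<xi> v) = c *\<^sub>R R \<xi>"
  proof -
    fix \<xi> c assume "\<xi> \<in> lin_dual"
    from RL[OF this this, of c 0] show "R (\<lambda>v. c * \<xi> v) = c *\<^sub>R R \<xi>" by simp
  qed
  have hsub: "subspace h"
    unfolding subspace_def h_def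
  proof (intro conjI ballI allI)
    show "0 \<in> R ` lin_dual" using R0 z0d by (rule_tac image_eqI[where x="\<lambda>v. 0"]) auto
  next
    fix x y assume "x \<in> R ` lin_dual" "y \<in> R ` lin_dual"
    then obtain \<xi> \<eta> where a: "\<xi> \<in> lin_dual" "\<eta> \<in> lin_dual" "x = R \<xi>" "y = R \<eta>" by blast
    have "R (\<lambda>v. 1 * \<xi> v + 1 * \<eta> v) = x + y" using RL[OF a(1,2), of 1 1] a by simp
    moreover have "(\<lambda>v. 1 * \<xi> v + 1 * \<eta> v) \<in> lin_dual" using a(1,2) unfolding ld
      by (intro linearI) (simp_all add: linear_add linear_cmul algebra_simps)
    ultimately show "x + y \<in> R ` lin_dual" by (rule_tac image_eqI[where x="\<lambda>v. 1 * \<xi> v + 1 * \<eta> v"]) auto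
  next
    fix c x assume "x \<in> R ` lin_dual"
    then obtain \<xi> where a: "\<xi> \<in> lin_dual" "x = R \<xi>" by blast
    have "R (\<lambda>v. c * \<xi> v) = c *\<^sub>R x" using Rsc[OF a(1)] a by simp
    moreover have "(\<lambda>v. c * \<xi> v) \<in> lin_dual" using a(1) unfolding ld
      by (intro linearI) (simp_all add: linear_add linear_cmul algebra_simps)
    ultimately show "c *\<^sub>R x \<in> R ` lin_dual" by (rule_tac image_eqI[where x="\<lambda>v. c * \<xi> v"]) auto
  qed
  have lamh: "\<And>x. x \<in> h \<Longrightarrow> J x = lam *\<^sub>R x" using lam h_def by blast
  have th0: "\<And>x. x \<in> h \<Longrightarrow> \<theta> x = 0" using th(3) h_def by blast
  have Rh: "\<And>\<xi>. \<xi> \<in> lin_dual \<Longrightarrow> R \<xi> \<in> h" unfolding h_def by blast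
  have Ka: "J (J u) + R (\<sigma> u) = - u" and Kc: "\<sigma> (J u) v = \<sigma> u (J v)" for u v
  proof -
    have P: "(u, \<lambda>v. 0) \<in> Phi" by (simp add: Phi_def linear_zero)
    have e1: "Kmat J R \<sigma> (u, \<lambda>v. 0) = (J u, \<sigma> u)" by (simp add: Kmat_def R0)
    have "Kmat J R \<sigma> (J u, \<sigma> u) = pneg (u, \<lambda>v. 0)" using KK[OF P] e1 by simp
    then have "J (J u) + R (\<sigma> u) = - u \<and> (\<lambda>v. \<sigma> (J u) v - \<sigma> u (J v)) = (\<lambda>w. - 0)"
      by (simp add: Kmat_def pneg_def)
    then show "J (J u) + R (\<sigma> u) = - u" "\<sigma> (J u) v = \<sigma> u (J v)" by (auto dest: fun_cong[where x=v])
  qed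
  have Kd: "\<sigma> (R \<xi>) v + \<xi> (J (J v)) = - \<xi> v" if xi: "\<xi> \<in> lin_dual" for \<xi> v
  proof -
    have P: "(0, \<xi>) \<in> Phi" using xi by (simp add: Phi_def ld)
    have e1: "Kmat J R \<sigma> (0, \<xi>) = (R \<xi>, \<lambda>v. - \<xi> (J v))"
      by (simp add: Kmat_def linear_0[OF JL] bilinear_lzero[OF sb])
    have "Kmat J R \<sigma> (R \<xi>, \<lambda>v. - \<xi> (J v)) = pneg (0, \<xi>)" using KK[OF P] e1 by simp
    then have "(\<lambda>v. \<sigma> (R \<xi>) v - - \<xi> (J (J v))) = (\<lambda>w. - \<xi> w)"
      by (simp add: Kmat_def pneg_def)
    then show ?thesis by (auto dest: fun_cong[where x=v])
  qed
  have hJJ: "\<And>x. x \<in> h \<Longrightarrow> J (J x) = lam\<^sup>2 *\<^sub>R x"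
    using lamh hsub by (simp add: linear_cmul[OF JL] power2_eq_square subspace_scale)
  have RSh: "\<And>x. x \<in> h \<Longrightarrow> R (\<sigma> x) = - (1 + lam\<^sup>2) *\<^sub>R x"
  proof -
    fix x assume x: "x \<in> h"
    have "R (\<sigma> x) = - x - J (J x)" using Ka[of x] by (simp add: algebra_simps)
    then show "R (\<sigma> x) = - (1 + lam\<^sup>2) *\<^sub>R x" using hJJ[OF x] by (simp add: algebra_simps)
  qed
  have sigh: "\<sigma> u w = - (1 + lam\<^sup>2) * \<omega> u w" if u: "u \<in> h" and w: "w \<in> h" for u w
  proof -
    obtain \<xi>1 where x1: "\<xi>1 \<in> lin_dual" "u = R \<xi>1" using u h_def by blast
    obtain \<xi>2 where x2: "\<xi>2 \<in> lin_dual" "w = R \<xi>2" using w h_def by blast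
    have "\<sigma> u w = - \<xi>1 w - \<xi>1 (J (J w))" using Kd[OF x1(1), of w] x1 by (simp add: algebra_simps)
    also have "\<xi>1 (J (J w)) = lam\<^sup>2 * \<xi>1 w" using hJJ[OF w] x1(1) by (simp add: ld linear_cmul)
    finally have "\<sigma> u w = - (1 + lam\<^sup>2) * \<xi>1 w" by (simp add: algebra_simps)
    moreover have "\<omega> u w = \<xi>1 w" using om_R x1 x2 by simp
    ultimately show ?thesis by simp
  qed
  have Rz: "\<xi> u = 0" if tt: "\<xi> \<in> lin_dual" "R \<xi> = 0" "u \<in> h" for \<xi> u
  proof -
    obtain \<eta> where "\<eta> \<in> lin_dual" "u = R \<eta>" using tt(3) h_def by blast
    then show ?thesis using Rsk[OF tt(1) \<open>\<eta> \<in> lin_dual\<close>] tt(2) tt(1) by (simp add: ld linear_0)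
  qed
  have Rz2: "R \<xi> = 0" if xi: "\<xi> \<in> lin_dual" and van: "\<forall>u\<in>h. \<xi> u = 0" for \<xi>
  proof -
    define \<eta> where "\<eta> = (\<lambda>v. inner (R \<xi>) v)"
    have eta: "\<eta> \<in> lin_dual" unfolding \<eta>_def ld by (rule bounded_linear.linear[OF bounded_linear_inner_right])
    have "\<eta> (R \<xi>) = - \<xi> (R \<eta>)" using Rsk[OF eta xi] .
    also have "\<xi> (R \<eta>) = 0" using van Rh[OF eta] by blast
    finally have "inner (R \<xi>) (R \<xi>) = 0" by (simp add: \<eta>_def)
    then show ?thesis by simp
  qed
  have Qlin: "linear (\<lambda>x. R (\<sigma> x))"
  proof (rule linearI)
    fix x y
    have "\<sigma> (x + y) = (\<lambda>v. 1 * \<sigma> x v + 1 * \<sigma> y v)" by (rule ext) (simp add: bilinear_ladd[OF sb])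
    then show "R (\<sigma> (x + y)) = R (\<sigma> x) + R (\<sigma> y)" using RL[OF sl sl, of 1 x 1 y] by simp
  next
    fix c x
    have "\<sigma> (c *\<^sub>R x) = (\<lambda>v. c * \<sigma> x v)" by (rule ext) (simp add: bilinear_lmul[OF sb])
    then show "R (\<sigma> (c *\<^sub>R x)) = c *\<^sub>R R (\<sigma> x)" using Rsc[OF sl] by simp
  qed
  have Qadd: "\<And>x y. R (\<sigma> (x + y)) = R (\<sigma> x) + R (\<sigma> y)" using linear_add[OF Qlin] by simp
  have Qsc: "\<And>c x. R (\<sigma> (c *\<^sub>R x)) = c *\<^sub>R R (\<sigma> x)" using linear_cmul[OF Qlin] by simp
  have Qdiff: "\<And>x y. R (\<sigma> (x - y)) = R (\<sigma> x) - R (\<sigma> y)" using linear_diff[OF Qlin] by simp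
  define l where "l = 1 + lam\<^sup>2"
  have lpos: "l > 0" unfolding l_def by (simp add: add_pos_nonneg)
  have Qh: "\<And>x. x \<in> h \<Longrightarrow> R (\<sigma> x) = - l *\<^sub>R x" using RSh unfolding l_def by simp
  have dimh: "dim h = 2" using assms(3) unfolding type1_def h_def by simp
  have hne: "h \<noteq> UNIV"
  proof
    assume "h = UNIV"
    then have "dim h = 4" by (simp add: dim_UNIV)
    then show False using dimh by simp
  qed
  then obtain y where y: "y \<notin> h" by blast
  define q1 where "q1 = y + (1 / l) *\<^sub>R R (\<sigma> y)"
  have Qq1: "R (\<sigma> q1) = 0"
  proof -
    have "R (\<sigma> q1) = R (\<sigma> y) + (1 / l) *\<^sub>R R (\<sigma> (R (\<sigma> y)))"
      unfolding q1_def by (simp add: Qadd Qsc)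
    also have "R (\<sigma> (R (\<sigma> y))) = - l *\<^sub>R R (\<sigma> y)" using Qh Rh[OF sl] by blast
    finally show ?thesis using lpos by simp
  qed
  have q1h: "q1 \<notin> h"
  proof
    assume "q1 \<in> h"
    then have "R (\<sigma> q1) = - l *\<^sub>R q1" by (rule Qh)
    then have "q1 = 0" using Qq1 lpos by simp
    then have "y = - ((1 / l) *\<^sub>R R (\<sigma> y))" unfolding q1_def by (simp add: add_eq_0_iff)
    moreover have "- ((1 / l) *\<^sub>R R (\<sigma> y)) \<in> h" using hsub Rh[OF sl] by (simp add: subspace_neg subspace_scale)
    ultimately show False using y by simp
  qed
  have JJq1: "J (J q1) = - q1" using Ka[of q1] Qq1 by simp
  define q2 where "q2 = J q1"
  have sq1h: "\<And>u. u \<in> h \<Longrightarrow> \<sigma> q1 u = 0" using Rz[OF sl Qq1] .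
  have Qq2: "R (\<sigma> q2) = 0"
  proof (rule Rz2[OF sl], intro ballI)
    fix u assume u: "u \<in> h"
    have "\<sigma> q2 u = \<sigma> q1 (J u)" unfolding q2_def by (rule Kc)
    also have "\<dots> = lam * \<sigma> q1 u" using lamh[OF u] bilinear_rmul[OF sb] by simp
    finally show "\<sigma> q2 u = 0" using sq1h[OF u] by simp
  qed
  have sq2h: "\<And>u. u \<in> h \<Longrightarrow> \<sigma> q2 u = 0" using Rz[OF sl Qq2] .
  have s12: "\<sigma> q1 q2 = 0"
  proof -
    have "\<sigma> (J q1) q1 = \<sigma> q1 (J q1)" by (rule Kc)
    moreover have "\<sigma> (J q1) q1 = - \<sigma> q1 (J q1)" by (rule ssk)
    ultimately show ?thesis unfolding q2_def by simp
  qed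
  have Jq2: "J q2 = - q1" unfolding q2_def by (rule JJq1)
  obtain Bs where Bs: "Bs \<subseteq> h" "independent Bs" "h \<subseteq> span Bs" "card Bs = dim h"
    by (rule basis_exists)
  then obtain h1 h2 where h12: "Bs = {h1, h2}" "h1 \<noteq> h2" using dimh card_2_iff by metis
  have hspan: "span {h1, h2} = h" using Bs h12 hsub by (metis span_subspace)
  have h1h: "h1 \<in> h" and h2h: "h2 \<in> h" using Bs h12 by auto
  have q2h: "q2 \<notin> span {q1, h1, h2}"
  proof
    assume "q2 \<in> span {q1, h1, h2}"
    then obtain k where k: "q2 - k *\<^sub>R q1 \<in> h" using hspan by (auto simp: span_insert)
    have "R (\<sigma> (q2 - k *\<^sub>R q1)) = 0" using Qq1 Qq2 by (simp add: Qdiff Qsc)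
    then have "q2 - k *\<^sub>R q1 = 0" using Qh[OF k] lpos by simp
    then have e: "q2 = k *\<^sub>R q1" by simp
    have "- q1 = k *\<^sub>R q2" using Jq2 e linear_cmul[OF JL, of k q1] unfolding q2_def by simp
    then have "- q1 = (k * k) *\<^sub>R q1" using e by simp
    then have "(k * k + 1) *\<^sub>R q1 = 0" by (metis add.commute neg_eq_iff_add_eq_0 scaleR_add_left scaleR_one)
    moreover have "k * k + 1 \<noteq> 0" using zero_le_square[of k] by linarith
    ultimately have "q1 = 0" by simp
    then show False using q1h hsub subspace_0 by blast
  qed
  have m1: "q1 \<notin> {h1, h2}"
  proof
    assume "q1 \<in> {h1, h2}"
    then have "q1 = h1 \<or> q1 = h2" by simp
    then show False using q1h h1h h2h by (elim disjE) simp_all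
  qed
  have m2: "q2 \<notin> {q1, h1, h2}"
  proof
    assume "q2 \<in> {q1, h1, h2}"
    then have "q2 \<in> span {q1, h1, h2}" by (rule span_base)
    then show False using q2h by contradiction
  qed
  define S4 where "S4 = {q2, q1, h1, h2}"
  have indep: "independent S4"
  proof -
    have i1: "independent {h1, h2}" using Bs(2) h12(1) by blast
    have n1: "q1 \<notin> span {h1, h2}" using hspan q1h by blast
    have i2: "independent {q1, h1, h2}" using independent_insert[of q1 "{h1, h2}"] i1 n1 m1 by argo
    show ?thesis unfolding S4_def using independent_insert[of q2 "{q1, h1, h2}"] i2 q2h m2 by argo
  qed
  have cardS4: "card S4 = 4"
  proof -
    show ?thesis unfolding S4_def using h12(2) m1 m2 by simp
  qed
  have spanS4: "span S4 = UNIV"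
    using dim_eq_full[of S4] dim_eq_card_independent[OF indep] cardS4 by simp
  have allspan: "\<And>x. x \<in> span S4" using spanS4 by simp
  have sq0: "\<sigma> q1 v = 0 \<and> \<sigma> q2 v = 0" for v
  proof -
    have l1: "linear (\<sigma> q1)" "linear (\<sigma> q2)" using sl ld by auto
    have z11: "\<sigma> q1 q1 = 0" and z22: "\<sigma> q2 q2 = 0" and z21: "\<sigma> q2 q1 = 0"
      using ssk[of q1 q1] ssk[of q2 q2] ssk[of q2 q1] s12 by linarith+
    have "\<sigma> q1 x = 0" if "x \<in> S4" for x
      using that sq1h[OF h1h] sq1h[OF h2h] s12 z11 unfolding S4_def by auto
    then have a: "\<sigma> q1 v = 0" using linear_eq_0_on_span[OF l1(1) _ allspan] by blast
    have "\<sigma> q2 x = 0" if "x \<in> S4" for x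
      using that sq2h[OF h1h] sq2h[OF h2h] z21 z22 unfolding S4_def by auto
    then have b: "\<sigma> q2 v = 0" using linear_eq_0_on_span[OF l1(2) _ allspan] by blast
    show ?thesis using a b by simp
  qed
  have omq: "\<omega> q1 v = 0" "\<omega> q2 v = 0" "\<omega> v q1 = 0" "\<omega> v q2 = 0" for v
  proof -
    have "q1 \<in> {X. \<forall>v. \<sigma> X v = 0}" "q2 \<in> {X. \<forall>v. \<sigma> X v = 0}" using sq0 by auto
    then have a: "\<omega> q1 v = 0" "\<omega> q2 v = 0" for v using om_p by blast+
    show "\<omega> q1 v = 0" "\<omega> q2 v = 0" "\<omega> v q1 = 0" "\<omega> v q2 = 0" using a om_skew[rule_format, of v q1] om_skew[rule_format, of v q2] by auto
  qed
  have decomp: "\<exists>k1 k2. w - k2 *\<^sub>R q2 - k1 *\<^sub>R q1 \<in> h" for w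
  proof -
    have "w \<in> span (insert q2 {q1, h1, h2})" using allspan[of w] unfolding S4_def .
    then obtain k2 where "w - k2 *\<^sub>R q2 \<in> span (insert q1 {h1, h2})"
      using span_insert[of q2 "{q1, h1, h2}"] by blast
    then obtain k1 where "w - k2 *\<^sub>R q2 - k1 *\<^sub>R q1 \<in> span {h1, h2}"
      using span_insert[of q1 "{h1, h2}"] by blast
    then show ?thesis using hspan by blast
  qed
  have tq: "\<theta> q1 \<noteq> 0 \<or> \<theta> q2 \<noteq> 0"
  proof (rule ccontr)
    assume "\<not> (\<theta> q1 \<noteq> 0 \<or> \<theta> q2 \<noteq> 0)"
    then have "\<theta> x = 0" if "x \<in> S4" for x using that th0[OF h1h] th0[OF h2h] unfolding S4_def by auto
    then have "\<theta> x = 0" for x using linear_eq_0_on_span[OF th(1) _ allspan] by blast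
    then show False using th(2) by auto
  qed
  have thJh: "\<theta> (J u) = 0" if "u \<in> h" for u
    using lamh[OF that] th0[OF that] linear_cmul[OF th(1)] by simp
  have Jq1: "J q1 = q2" unfolding q2_def ..
  show ?thesis
  proof
    assume D: "d_rho_zero B J lam \<omega> \<theta>"
    have tb: "\<theta> (B x y) = 0 \<and> \<theta> (J (B x y)) = 0" for x y
      using D unfolding d_rho_zero_def ce_d1_def spinor1_def by (auto simp: complex_eq_iff)
    have Bh: "B x y \<in> h" for x y
    proof -
      define w where "w = B x y"
      obtain k1 k2 where u: "w - k2 *\<^sub>R q2 - k1 *\<^sub>R q1 \<in> h" using decomp by blast
      define u where "u = w - k2 *\<^sub>R q2 - k1 *\<^sub>R q1"
      have we: "w = u + k2 *\<^sub>R q2 + k1 *\<^sub>R q1" unfolding u_def by simp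
      have uh: "u \<in> h" using u unfolding u_def .
      have e1: "\<theta> w = k2 * \<theta> q2 + k1 * \<theta> q1"
        using we th0[OF uh] by (simp add: linear_add[OF th(1)] linear_cmul[OF th(1)])
      have Jw: "J w = J u + k2 *\<^sub>R (- q1) + k1 *\<^sub>R q2"
        using we Jq2 Jq1 by (simp only: linear_add[OF JL] linear_cmul[OF JL])
      have e2: "\<theta> (J w) = - k2 * \<theta> q1 + k1 * \<theta> q2"
        unfolding Jw using thJh[OF uh]
        by (simp only: linear_add[OF th(1)] linear_cmul[OF th(1)] linear_neg[OF th(1)]) simp
      have z1: "k2 * \<theta> q2 + k1 * \<theta> q1 = 0" and z2: "- k2 * \<theta> q1 + k1 * \<theta> q2 = 0"
        using tb[of x y] e1 e2 unfolding w_def by auto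
      have "k1 * ((\<theta> q1)\<^sup>2 + (\<theta> q2)\<^sup>2) = \<theta> q1 * (k2 * \<theta> q2 + k1 * \<theta> q1) + \<theta> q2 * (- k2 * \<theta> q1 + k1 * \<theta> q2)"
        by (simp add: power2_eq_square algebra_simps)
      then have a1: "k1 * ((\<theta> q1)\<^sup>2 + (\<theta> q2)\<^sup>2) = 0" using z1 z2 by simp
      have "k2 * ((\<theta> q1)\<^sup>2 + (\<theta> q2)\<^sup>2) = \<theta> q2 * (k2 * \<theta> q2 + k1 * \<theta> q1) - \<theta> q1 * (- k2 * \<theta> q1 + k1 * \<theta> q2)"
        by (simp add: power2_eq_square algebra_simps)
      then have a2: "k2 * ((\<theta> q1)\<^sup>2 + (\<theta> q2)\<^sup>2) = 0" using z1 z2 by simp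
      have "(\<theta> q1)\<^sup>2 + (\<theta> q2)\<^sup>2 \<noteq> 0" using tq by (simp add: sum_power2_eq_zero_iff)
      then have "k1 = 0" "k2 = 0" using a1 a2 by auto
      then show ?thesis using uh we unfolding w_def by simp
    qed
    have "span {B x y | x y. True} \<subseteq> h" using Bh hsub by (intro span_minimal) auto
    then show "span {B x y | x y. True} \<subseteq> R ` lin_dual" unfolding h_def .
  next
    assume S: "span {B x y | x y. True} \<subseteq> R ` lin_dual"
    have Bh: "B x y \<in> h" for x y
    proof -
      have "B x y \<in> {B x y | x y. True}" by blast
      then have "B x y \<in> span {B x y | x y. True}" by (rule span_base)
      then show ?thesis unfolding h_def by (rule subsetD[OF S])
    qed
    have phB: "spinor1 J \<theta> (B x y) = 0" for x y
      unfolding spinor1_def using th0[OF Bh] thJh[OF Bh] by simp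
    have gpart: "R (\<lambda>v. - \<sigma> u (B X v)) = - l *\<^sub>R B X u"
      if sx: "\<forall>v. \<sigma> X v = 0" and uh: "u \<in> h" for X u
    proof -
      have P1: "(X, \<lambda>v. 0) \<in> Phi" "(u, \<lambda>v. 0) \<in> Phi" by (simp_all add: Phi_def linear_zero)
      have N: "nijenhuis B (Kmat J R \<sigma>) (X, \<lambda>v. 0) (u, \<lambda>v. 0) = pzero" using NN[OF P1] .
      have Ka: "Kmat J R \<sigma> (X, \<lambda>v. 0) = (J X, \<lambda>v. 0)" using sx by (simp add: Kmat_def R0)
      have Kb: "Kmat J R \<sigma> (u, \<lambda>v. 0) = (lam *\<^sub>R u, \<sigma> u)" using lamh[OF uh] by (simp add: Kmat_def R0)
      have b1: "pbracket B (J X, \<lambda>v. 0) (lam *\<^sub>R u, \<sigma> u) = (lam *\<^sub>R B (J X) u, \<lambda>w. - \<sigma> u (B (J X) w))"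
        by (simp add: pbracket_def adt_def bilinear_rmul[OF Bb])
      have b2: "pbracket B (J X, \<lambda>v. 0) (u, \<lambda>v. 0) = (B (J X) u, \<lambda>w. 0)"
        by (simp add: pbracket_def adt_def)
      have b3: "pbracket B (X, \<lambda>v. 0) (lam *\<^sub>R u, \<sigma> u) = (lam *\<^sub>R B X u, \<lambda>w. - \<sigma> u (B X w))"
        by (simp add: pbracket_def adt_def bilinear_rmul[OF Bb])
      have b4: "pbracket B (X, \<lambda>v. 0) (u, \<lambda>v. 0) = (B X u, \<lambda>w. 0)"
        by (simp add: pbracket_def adt_def)
      have k2: "Kmat J R \<sigma> (B (J X) u, \<lambda>w. 0) = (lam *\<^sub>R B (J X) u, \<sigma> (B (J X) u))"
        using lamh[OF Bh] by (simp add: Kmat_def R0)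
      have k3: "Kmat J R \<sigma> (lam *\<^sub>R B X u, \<lambda>w. - \<sigma> u (B X w)) =
          (J (lam *\<^sub>R B X u) + R (\<lambda>w. - \<sigma> u (B X w)), \<lambda>v. \<sigma> (lam *\<^sub>R B X u) v - (- \<sigma> u (B X (J v))))"
        by (simp add: Kmat_def)
      have P2: "(B X u, \<lambda>w. 0) \<in> Phi" by (simp add: Phi_def linear_zero)
      have k4: "Kmat J R \<sigma> (Kmat J R \<sigma> (B X u, \<lambda>w. 0)) = pneg (B X u, \<lambda>w. 0)" using KK[OF P2] .
      have "fst (nijenhuis B (Kmat J R \<sigma>) (X, \<lambda>v. 0) (u, \<lambda>v. 0)) = 0" using N by (simp add: pzero_def)
      then have "lam *\<^sub>R B (J X) u - lam *\<^sub>R B (J X) u - (J (lam *\<^sub>R B X u) + R (\<lambda>w. - \<sigma> u (B X w))) + - B X u = 0"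
        unfolding nijenhuis_def Ka Kb b1 b2 b3 b4 k2 k3 k4 by (simp add: psub_def padd_def pneg_def)
      moreover have "J (lam *\<^sub>R B X u) = (lam * lam) *\<^sub>R B X u" using lamh[OF Bh] by (simp add: linear_cmul[OF JL])
      ultimately have "R (\<lambda>w. - \<sigma> u (B X w)) = - B X u - (lam * lam) *\<^sub>R B X u"
        by (simp add: algebra_simps)
      then show ?thesis unfolding l_def by (simp add: power2_eq_square algebra_simps)
    qed
    have trace: "\<omega> w (B X u) = \<omega> u (B X w)"
      if sx: "\<forall>v. \<sigma> X v = 0" and uh: "u \<in> h" and wh: "w \<in> h" for X u w
    proof -
      obtain \<eta> where eta: "\<eta> \<in> lin_dual" "w = R \<eta>" using wh h_def by blast
      define \<zeta> where "\<zeta> = (\<lambda>v. - \<sigma> u (B X v))"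
      have zl: "\<zeta> \<in> lin_dual" unfolding ld \<zeta>_def
        by (intro linearI) (simp_all add: bilinear_radd[OF Bb] bilinear_rmul[OF Bb] linear_add[OF sl[unfolded ld]] linear_cmul[OF sl[unfolded ld]])
      have "\<omega> (R \<eta>) (R \<zeta>) = \<eta> (R \<zeta>)" using om_R eta(1) zl by blast
      also have "\<dots> = - \<zeta> (R \<eta>)" using Rsk[OF eta(1) zl] .
      also have "\<dots> = \<sigma> u (B X w)" unfolding \<zeta>_def eta(2) by simp
      also have "\<dots> = - l * \<omega> u (B X w)" using sigh[OF uh Bh] unfolding l_def by simp
      finally have e1: "\<omega> w (R \<zeta>) = - l * \<omega> u (B X w)" using eta(2) by simp
      have "R \<zeta> = - l *\<^sub>R B X u" unfolding \<zeta>_def using gpart[OF sx uh] .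
      then have "\<omega> w (R \<zeta>) = - l * \<omega> w (B X u)" by (simp add: bilinear_rmul[OF om_bil] bilinear_rneg[OF om_bil])
      then show ?thesis using e1 lpos by simp
    qed
    have sx1: "\<forall>v. \<sigma> q1 v = 0" and sx2: "\<forall>v. \<sigma> q2 v = 0" using sq0 by auto
    have tr1: "\<omega> (B q1 h2) h1 = \<omega> (B q1 h1) h2"
      using trace[OF sx1 h1h h2h] om_skew[rule_format, of h2 "B q1 h1"] om_skew[rule_format, of h1 "B q1 h2"] by linarith
    have tr2: "\<omega> (B q2 h2) h1 = \<omega> (B q2 h1) h2"
      using trace[OF sx2 h1h h2h] om_skew[rule_format, of h2 "B q2 h1"] om_skew[rule_format, of h1 "B q2 h2"] by linarith
    have oh: "\<omega> h1 (B x y) = - \<omega> (B x y) h1" "\<omega> h2 (B x y) = - \<omega> (B x y) h2" for x y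
      by (rule om_skew[rule_format])+
    have ph: "spinor1 J \<theta> h1 = 0" "spinor1 J \<theta> h2 = 0" "spinor1 J \<theta> (- x) = - spinor1 J \<theta> x" for x
      unfolding spinor1_def using th0[OF h1h] th0[OF h2h] thJh[OF h1h] thJh[OF h2h]
      by (simp_all add: linear_neg[OF th(1)] linear_neg[OF JL])
    have bs: "B h2 h1 = - B h1 h2" "B h1 q1 = - B q1 h1" "B h2 q1 = - B q1 h2" "B h1 q2 = - B q2 h1"
      "B h2 q2 = - B q2 h2" "B q2 q1 = - B q1 q2" by (rule Bsk)+
    have omn: "\<omega> (- x) y = - \<omega> x y" for x y by (rule bilinear_lneg[OF om_bil])
    have om0: "\<omega> 0 x = 0" "\<omega> x 0 = 0" for x using bilinear_lzero[OF om_bil] bilinear_rzero[OF om_bil] by auto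
    have omxx: "\<omega> x x = 0" for x using om_skew[rule_format, of x x] by linarith
    have sp0: "spinor1 J \<theta> 0 = 0" using linear_0[OF lin_sp1[OF th(1) JL]] .
    have omn2: "\<omega> x (- y) = - \<omega> x y" for x y by (rule bilinear_rneg[OF om_bil])
    define \<beta> where "\<beta> = spinor3 J lam \<omega> \<theta>"
    have base: "ce_d3 B \<beta> a b c d = 0" if "a \<in> S4" "b \<in> S4" "c \<in> S4" "d \<in> S4" for a b c d
      using that unfolding S4_def \<beta>_def
      apply (simp only: insert_iff empty_iff simp_thms)
      apply (elim disjE)
      apply (simp_all add: ce_d3_def spinor3_def wedge21_def Bxx bs omn omq oh tr1 tr2 ph phB om0 sp0 omxx omn2)
      done
    have L: "\<And>y z. linear (\<lambda>x. \<beta> x y z)" "\<And>x z. linear (\<lambda>y. \<beta> x y z)" "\<And>x y. linear (\<lambda>z. \<beta> x y z)"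
      unfolding \<beta>_def using lin_sp3[OF om_bil th(1) JL] by auto
    note CL = ce_d3_lin[OF Bb L(1) L(2) L(3)]
    have s3: "ce_d3 B \<beta> a b c x = 0" if "a \<in> S4" "b \<in> S4" "c \<in> S4" for a b c x
      using linear_eq_0_on_span[OF CL(4)[of a b c], OF _ allspan[of x]] base that by blast
    have s2: "ce_d3 B \<beta> a b x y = 0" if "a \<in> S4" "b \<in> S4" for a b x y
      using linear_eq_0_on_span[OF CL(3)[of a b y], OF _ allspan[of x]] s3 that by blast
    have s1: "ce_d3 B \<beta> a x y z = 0" if "a \<in> S4" for a x y z
      using linear_eq_0_on_span[OF CL(2)[of a y z], OF _ allspan[of x]] s2 that by blast
    have s0: "ce_d3 B \<beta> w x y z = 0" for w x y z
      using linear_eq_0_on_span[OF CL(1)[of x y z], OF _ allspan[of w]] s1 by blast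
    show "d_rho_zero B J lam \<omega> \<theta>"
      unfolding d_rho_zero_def using s0 phB unfolding \<beta>_def by (simp add: ce_d1_def)
  qed
qed

end
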